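(* Let $X=\{a,b\}$ with $a\ne b$, and consider the commutative unital ring $(\mathcal{P}(X),\Delta,\cap)$, where addition is symmetric difference $B\Delta C=(B\cap C^c)\cup(C\cap B^c)$ (zero $\emptyset$) and multiplication is intersection (unit $X$). The irreducible $\lambda$-quiddities over this ring are exactly, up to cyclic permutation: - $(X,X,X)$; - $(\{a\},\{b\},\{a\},\{b\})$, $(\emptyset,\emptyset,\emptyset,\emptyset)$, $(\{a\},\emptyset,\{a\},\emptyset)$, $(\{b\},\emptyset,\{b\},\emptyset)$; - $(\{a\},\{a\},\{a\},\{a\},\{a\},\{a\})$ and $(\{b\},\{b\},\{b\},\{b\},\{b\},\{b\})$.
   Context: For $a_1,\ldots,a_n$ in a commutative unital ring $A$ (with unit $1$), $M_n(a_1,\ldots,a_n)=\begin{pmatrix}a_n&-1\\1&0\end{pmatrix}\cdots\begin{pmatrix}a_1&-1\\1&0\end{pmatrix}$. An $n$-tuple $(a_1,\ldots,a_n)\in A^n$ is a $\lambda$-quiddity over $A$ if $M_n(a_1,\ldots,a_n)=\pm\mathrm{Id}$. For $(a_1,\ldots,a_n)\in A^n$, $(b_1,\ldots,b_m)\in A^m$, define $(a_1,\ldots,a_n)\oplus(b_1,\ldots,b_m)=(a_1+b_m,a_2,\ldots,a_{n-1},a_n+b_1,b_2,\ldots,b_{m-1})$. Write $(a_1,\ldots,a_n)\sim(b_1,\ldots,b_n)$ if $(b_1,\ldots,b_n)$ is obtained from $(a_1,\ldots,a_n)$ or from $(a_n,\ldots,a_1)$ by a cyclic permutation. A $\lambda$-quiddity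 $(c_1,\ldots,c_n)$ with $n\ge3$ is reducible if there exist a $\lambda$-quiddity $(b_1,\ldots,b_l)$ and a tuple $(a_1,\ldots,a_m)$ with $l,m\ge3$ and $(c_1,\ldots,c_n)\sim(a_1,\ldots,a_m)\oplus(b_1,\ldots,b_l)$; it is irreducible otherwise (by convention $(0,0)$ is reducible). *)

theory Defs
  imports "HOL-Algebra.Ring"
begin

text \<open>2x2 matrices over a ring R, as tuples (p, q, r, s) = [[p, q], [r, s]].\<close>
type_synonym 'a mat2 = "'a \<times> 'a \<times> 'a \<times> 'a"

definition mat2_mult :: "('a, 'b) ring_scheme \<Rightarrow> 'a mat2 \<Rightarrow> 'a mat2 \<Rightarrow> 'a mat2" where
  "mat2_mult R A B = (case A of (p, q, r, s) \<Rightarrow> case B of (p', q', r', s') \<Rightarrow>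
     (p \<otimes>\<^bsub>R\<^esub> p' \<oplus>\<^bsub>R\<^esub> q \<otimes>\<^bsub>R\<^esub> r',
      p \<otimes>\<^bsub>R\<^esub> q' \<oplus>\<^bsub>R\<^esub> q \<otimes>\<^bsub>R\<^esub> s',
      r \<otimes>\<^bsub>R\<^esub> p' \<oplus>\<^bsub>R\<^esub> s \<otimes>\<^bsub>R\<^esub> r',
      r \<otimes>\<^bsub>R\<^esub> q' \<oplus>\<^bsub>R\<^esub> s \<otimes>\<^bsub>R\<^esub> s'))"

definition mat2_id :: "('a, 'b) ring_scheme \<Rightarrow> 'a mat2" where
  "mat2_id R = (\<one>\<^bsub>R\<^esub>, \<zero>\<^bsub>R\<^esub>, \<zero>\<^bsub>R\<^esub>, \<one>\<^bsub>R\<^esub>)"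

definition mat2_neg_id :: "('a, 'b) ring_scheme \<Rightarrow> 'a mat2" where
  "mat2_neg_id R = (\<ominus>\<^bsub>R\<^esub> \<one>\<^bsub>R\<^esub>, \<zero>\<^bsub>R\<^esub>, \<zero>\<^bsub>R\<^esub>, \<ominus>\<^bsub>R\<^esub> \<one>\<^bsub>R\<^esub>)"

definition mat2_elem :: "('a, 'b) ring_scheme \<Rightarrow> 'a \<Rightarrow> 'a mat2" where
  "mat2_elem R x = (x, \<ominus>\<^bsub>R\<^esub> \<one>\<^bsub>R\<^esub>, \<one>\<^bsub>R\<^esub>, \<zero>\<^bsub>R\<^esub>)"

definition Mq :: "('a, 'b) ring_scheme \<Rightarrow> 'a list \<Rightarrow> 'a mat2" where
  "Mq R xs = foldl (\<lambda>M x. mat2_mult R (mat2_elem R x) M) (mat2_id R) xs"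

definition lambda_quiddity :: "('a, 'b) ring_scheme \<Rightarrow> 'a list \<Rightarrow> bool" where
  "lambda_quiddity R c \<longleftrightarrow> c \<noteq> [] \<and> set c \<subseteq> carrier R \<and>
     (Mq R c = mat2_id R \<or> Mq R c = mat2_neg_id R)"

definition qsum :: "('a, 'b) ring_scheme \<Rightarrow> 'a list \<Rightarrow> 'a list \<Rightarrow> 'a list" where
  "qsum R as bs = [hd as \<oplus>\<^bsub>R\<^esub> last bs] @ butlast (tl as) @ [last as \<oplus>\<^bsub>R\<^esub> hd bs] @ butlast (tl bs)"

definition qequiv :: "'a list \<Rightarrow> 'a list \<Rightarrow> bool" where
  "qequiv c d \<longleftrightarrow> (\<exists>k. d = rotate k c \<or> d = rotate k (rev c))"

definition q_reducible :: "('a, 'b) ring_scheme \<Rightarrow> 'a list \<Rightarrow> bool" where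
  "q_reducible R c \<longleftrightarrow> c = [\<zero>\<^bsub>R\<^esub>, \<zero>\<^bsub>R\<^esub>] \<or>
     (length c \<ge> 3 \<and> (\<exists>as bs. lambda_quiddity R bs \<and> length bs \<ge> 3 \<and>
        length as \<ge> 3 \<and> set as \<subseteq> carrier R \<and> qequiv c (qsum R as bs)))"

definition q_irreducible :: "('a, 'b) ring_scheme \<Rightarrow> 'a list \<Rightarrow> bool" where
  "q_irreducible R c \<longleftrightarrow> lambda_quiddity R c \<and> \<not> q_reducible R c"

definition powerset_ring :: "'a \<Rightarrow> 'a \<Rightarrow> 'a set ring" where
  "powerset_ring a b = \<lparr>carrier = Pow {a, b}, mult = (\<inter>), one = {a, b},
      zero = {}, add = (\<lambda>B C. (B \<inter> - C) \<union> (C \<inter> - B))\<rparr>"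

end

theory Submission imports Defs begin

lemma rot4: "rotate k [x,y,z,w] \<in> {[x,y,z,w],[y,z,w,x],[z,w,x,y],[w,x,y,z]}"
proof -
  have e: "rotate k [x,y,z,w] = rotate (k mod 4) [x,y,z,w]" by (subst rotate_conv_mod) simp
  have r: "rotate 0 [x,y,z,w] = [x,y,z,w]" "rotate 1 [x,y,z,w] = [y,z,w,x]"
    "rotate 2 [x,y,z,w] = [z,w,x,y]" "rotate 3 [x,y,z,w] = [w,x,y,z]"
    by (simp_all add: numeral_2_eq_2 numeral_3_eq_3)
  have "k mod 4 < 4" by simp
  then have "k mod 4 = 0 \<or> k mod 4 = 1 \<or> k mod 4 = 2 \<or> k mod 4 = 3" by linarith
  then show ?thesis using e r by (elim disjE) (simp_all only: insert_iff, blast+)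
qed
lemma rot3: "rotate k [x,y,z] \<in> {[x,y,z],[y,z,x],[z,x,y]}"
proof -
  have e: "rotate k [x,y,z] = rotate (k mod 3) [x,y,z]" by (subst rotate_conv_mod) simp
  have r: "rotate 0 [x,y,z] = [x,y,z]" "rotate 1 [x,y,z] = [y,z,x]"
    "rotate 2 [x,y,z] = [z,x,y]"
    by (simp_all add: numeral_2_eq_2)
  have "k mod 3 < 3" by simp
  then have "k mod 3 = 0 \<or> k mod 3 = 1 \<or> k mod 3 = 2" by linarith
  then show ?thesis using e r by (elim disjE) (simp_all only: insert_iff, blast+)
qed
context fixes a b :: 'x assumes ab: "a \<noteq> b" begin

abbreviation "PR \<equiv> powerset_ring a b"

lemma carR: "carrier PR = Pow {a,b}" by (simp add: powerset_ring_def)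
lemma addR: "x \<oplus>\<^bsub>PR\<^esub> y = (x \<inter> - y) \<union> (y \<inter> - x)" by (simp add: powerset_ring_def)
lemma mulR: "x \<otimes>\<^bsub>PR\<^esub> y = x \<inter> y" by (simp add: powerset_ring_def)
lemma oneR: "\<one>\<^bsub>PR\<^esub> = {a,b}" by (simp add: powerset_ring_def)
lemma zeroR: "\<zero>\<^bsub>PR\<^esub> = {}" by (simp add: powerset_ring_def)
lemma invR: "\<ominus>\<^bsub>PR\<^esub> {a,b} = {a,b}"
  unfolding a_inv_def m_inv_def
  by (rule the_equality) (auto simp: powerset_ring_def)

lemma add_tab:
  "{} \<oplus>\<^bsub>PR\<^esub> x = x" "x \<oplus>\<^bsub>PR\<^esub> {} = x"
  "{a} \<oplus>\<^bsub>PR\<^esub> {a} = {}" "{a} \<oplus>\<^bsub>PR\<^esub> {b} = {a,b}" "{a} \<oplus>\<^bsub>PR\<^esub> {a,b} = {b}"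
  "{b} \<oplus>\<^bsub>PR\<^esub> {a} = {a,b}" "{b} \<oplus>\<^bsub>PR\<^esub> {b} = {}" "{b} \<oplus>\<^bsub>PR\<^esub> {a,b} = {a}"
  "{a,b} \<oplus>\<^bsub>PR\<^esub> {a} = {b}" "{a,b} \<oplus>\<^bsub>PR\<^esub> {b} = {a}" "{a,b} \<oplus>\<^bsub>PR\<^esub> {a,b} = {}"
  using ab by (auto simp: addR)
lemma mul_tab:
  "{} \<otimes>\<^bsub>PR\<^esub> x = {}" "x \<otimes>\<^bsub>PR\<^esub> {} = {}"
  "{a} \<otimes>\<^bsub>PR\<^esub> {a} = {a}" "{a} \<otimes>\<^bsub>PR\<^esub> {b} = {}" "{a} \<otimes>\<^bsub>PR\<^esub> {a,b} = {a}"
  "{b} \<otimes>\<^bsub>PR\<^esub> {a} = {}" "{b} \<otimes>\<^bsub>PR\<^esub> {b} = {b}" "{b} \<otimes>\<^bsub>PR\<^esub> {a,b} = {b}"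
  "{a,b} \<otimes>\<^bsub>PR\<^esub> {a} = {a}" "{a,b} \<otimes>\<^bsub>PR\<^esub> {b} = {b}" "{a,b} \<otimes>\<^bsub>PR\<^esub> {a,b} = {a,b}"
  using ab by (auto simp: mulR)

lemma neqs: "{a} \<noteq> {b}" "{b} \<noteq> {a}" "{a} \<noteq> {a,b}" "{b} \<noteq> {a,b}" "{a,b} \<noteq> {a}" "{a,b} \<noteq> {b}"
  using ab by auto

lemmas comp = Mq_def mat2_mult_def mat2_elem_def mat2_id_def mat2_neg_id_def oneR zeroR invR add_tab mul_tab neqs

lemma four: "x \<in> carrier PR \<Longrightarrow> x = {} \<or> x = {a} \<or> x = {b} \<or> x = {a,b}"
  by (auto simp: carR)

lemma quid_iff: "lambda_quiddity PR c \<longleftrightarrow> c \<noteq> [] \<and> set c \<subseteq> carrier PR \<and> Mq PR c = mat2_id PR"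
  by (simp add: lambda_quiddity_def mat2_neg_id_def mat2_id_def invR oneR)

lemma mm: "mat2_mult PR (p,q,r,s) (p',q',r',s') = (p \<otimes>\<^bsub>PR\<^esub> p' \<oplus>\<^bsub>PR\<^esub> q \<otimes>\<^bsub>PR\<^esub> r',
      p \<otimes>\<^bsub>PR\<^esub> q' \<oplus>\<^bsub>PR\<^esub> q \<otimes>\<^bsub>PR\<^esub> s',
      r \<otimes>\<^bsub>PR\<^esub> p' \<oplus>\<^bsub>PR\<^esub> s \<otimes>\<^bsub>PR\<^esub> r',
      r \<otimes>\<^bsub>PR\<^esub> q' \<oplus>\<^bsub>PR\<^esub> s \<otimes>\<^bsub>PR\<^esub> s')" by (simp add: mat2_mult_def)
lemmas comp2 = Mq_def mm mat2_elem_def mat2_id_def oneR zeroR invR add_tab mul_tab neqs foldl_Cons foldl_Nil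
lemma sd_cancel: "(u \<oplus>\<^bsub>PR\<^esub> v) \<oplus>\<^bsub>PR\<^esub> v = u" by (auto simp: addR)
lemma sd_closed: "u \<in> carrier PR \<Longrightarrow> v \<in> carrier PR \<Longrightarrow> u \<oplus>\<^bsub>PR\<^esub> v \<in> carrier PR"
  by (auto simp: addR carR)

lemma qequiv_set: "qequiv c d \<Longrightarrow> set d = set c" by (auto simp: qequiv_def)
lemma qequiv_len: "qequiv c d \<Longrightarrow> length d = length c" by (auto simp: qequiv_def)
lemma qsum_len: "length as \<ge> 2 \<Longrightarrow> length bs \<ge> 2 \<Longrightarrow> length (qsum PR as bs) = length as + length bs - 2"
  by (simp add: qsum_def)
lemma qsum_set: "set (butlast (tl bs)) \<subseteq> set (qsum PR as bs)"
  by (auto simp: qsum_def)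

lemma split3: "length xs \<ge> 2 \<Longrightarrow> \<exists>x mid z. xs = x # mid @ [z]"
proof (cases xs)
  case (Cons x ys)
  assume "length xs \<ge> 2"
  then have "ys \<noteq> []" using Cons by auto
  then have "ys = butlast ys @ [last ys]" by simp
  then show ?thesis using Cons by blast
qed simp

lemma reduce:
  assumes bq: "lambda_quiddity PR bs" and lb: "length bs \<ge> 3" and cc: "set c \<subseteq> carrier PR"
   and ln: "length c > length bs"
   and dr: "drop (length c - (length bs - 2)) (rotate k c) = butlast (tl bs)"
  shows "q_reducible PR c"
proof -
  define d where "d = rotate k c"
  define p where "p = length c - (length bs - 2)"
  have ld: "length d = length c" by (simp add: d_def)
  have p3: "p \<ge> 3" using ln lb by (simp add: p_def)
  have "length (take p d) \<ge> 2" using p3 ld ln lb by simp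
  then obtain x mid z where tk: "take p d = x # mid @ [z]" using split3 by blast
  have ltk: "length (take p d) = p" using ld ln p_def by simp
  have sd: "set d = set c" by (simp add: d_def)
  have xz: "x \<in> carrier PR" "z \<in> carrier PR" "set mid \<subseteq> carrier PR"
    using cc sd set_take_subset[of p d] tk by auto
  have bc: "set bs \<subseteq> carrier PR" using bq by (simp add: lambda_quiddity_def)
  have bne: "bs \<noteq> []" using lb by auto
  have hl: "hd bs \<in> carrier PR" "last bs \<in> carrier PR" using bc bne by auto
  define as where "as = (x \<oplus>\<^bsub>PR\<^esub> last bs) # mid @ [z \<oplus>\<^bsub>PR\<^esub> hd bs]"
  have las: "length as \<ge> 3" using ltk tk p3 by (simp add: as_def)
  have sas: "set as \<subseteq> carrier PR" using xz hl sd_closed by (auto simp: as_def)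
  have "qsum PR as bs = take p d @ drop p d"
    unfolding qsum_def as_def using tk dr by (simp add: sd_cancel d_def p_def)
  then have "qsum PR as bs = rotate k c" by (simp add: d_def)
  then have "qequiv c (qsum PR as bs)" by (auto simp: qequiv_def)
  then show ?thesis unfolding q_reducible_def using bq lb las sas ln lb by auto
qed

lemma drop2: "length d = n \<Longrightarrow> n \<ge> 2 \<Longrightarrow> drop (n-2) d = [d!(n-2), d!(n-1)]"
proof -
  assume h: "length d = n" "n \<ge> 2"
  have "drop (n-1) d = [d!(n-1)]"
    using Cons_nth_drop_Suc[of "n-1" d] h by simp
  moreover have "drop (n-2) d = d!(n-2) # drop (Suc (n-2)) d"
    using Cons_nth_drop_Suc[of "n-2" d] h by simp
  moreover have "Suc (n-2) = n-1" using h by simp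
  ultimately show ?thesis by simp
qed

lemma drop1: "length d = n \<Longrightarrow> n \<ge> 1 \<Longrightarrow> drop (n-1) d = [d!(n-1)]"
  using Cons_nth_drop_Suc[of "n-1" d] by simp

lemma bs_exists:
  assumes "u \<in> {{},{a},{b}}" "v \<in> {{},{a},{b}}" "\<not> (u \<noteq> {} \<and> v = u)"
  shows "lambda_quiddity PR [v,u,v,u]"
  using assms unfolding quid_iff apply (simp only: insert_iff empty_iff)
  apply (elim disjE)
  apply (simp_all add: comp2 carR)
  done

lemma pair_red:
  assumes cc: "set c \<subseteq> carrier PR" and n5: "length c \<ge> 5" and il: "i < length c"
    and u: "c!i \<in> {{},{a},{b}}" and v: "c!((i+1) mod length c) \<in> {{},{a},{b}}"
    and nb: "\<not> (c!i \<noteq> {} \<and> c!((i+1) mod length c) = c!i)"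
  shows "q_reducible PR c"
proof -
  let ?n = "length c"
  let ?u = "c!i" and ?v = "c!((i+1) mod length c)"
  have bq: "lambda_quiddity PR [?v,?u,?v,?u]" using bs_exists[OF u v nb] .
  have "drop (?n - 2) (rotate (i+2) c) = [rotate (i+2) c ! (?n-2), rotate (i+2) c ! (?n-1)]"
    using drop2[of "rotate (i+2) c" ?n] n5 by simp
  also have "rotate (i+2) c ! (?n-2) = ?u"
  proof -
    have "rotate (i+2) c ! (?n-2) = c ! ((i + 2 + (?n-2)) mod ?n)"
      by (rule nth_rotate) (use n5 in simp)
    also have "i + 2 + (?n-2) = i + ?n" using n5 by simp
    finally show ?thesis using il by simp
  qed
  also have "rotate (i+2) c ! (?n-1) = ?v"
  proof -
    have "rotate (i+2) c ! (?n-1) = c ! ((i + 2 + (?n-1)) mod ?n)"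
      by (rule nth_rotate) (use n5 in simp)
    also have "i + 2 + (?n-1) = (i+1) + ?n" using n5 by simp
    finally show ?thesis by (simp only: mod_add_self2)
  qed
  finally have dr: "drop (?n - (length [?v,?u,?v,?u] - 2)) (rotate (i+2) c) = butlast (tl [?v,?u,?v,?u])"
    by (simp add: numeral_2_eq_2)
  show ?thesis using reduce[OF bq _ cc _ dr] n5 by simp
qed

lemma X_red:
  assumes cc: "set c \<subseteq> carrier PR" and n4: "length c \<ge> 4" and X: "{a,b} \<in> set c"
  shows "q_reducible PR c"
proof -
  let ?n = "length c"
  obtain i where il: "i < ?n" and ci: "c!i = {a,b}" using X by (auto simp: in_set_conv_nth)
  have bq: "lambda_quiddity PR [{a,b},{a,b},{a,b}]" by (simp add: quid_iff comp2 carR)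
  have "drop (?n - 1) (rotate (i+1) c) = [rotate (i+1) c ! (?n-1)]"
    using drop1[of "rotate (i+1) c" ?n] n4 by simp
  also have "rotate (i+1) c ! (?n-1) = c ! ((i + 1 + (?n-1)) mod ?n)"
    by (rule nth_rotate) (use n4 in simp)
  also have "i + 1 + (?n-1) = i + ?n" using n4 by simp
  finally have dr: "drop (?n - (length [{a,b},{a,b},{a,b}] - 2)) (rotate (i+1) c) = butlast (tl [{a,b},{a,b},{a,b}])"
    using il ci by simp
  show ?thesis using reduce[OF bq _ cc _ dr] n4 by simp
qed

lemma rot_rep: "rotate k (replicate n u) = replicate n u"
  by (induct k) simp_all

lemma rep6: "replicate 6 u = [u,u,u,u,u,u]" by (simp add: numeral_eq_Suc)
lemma rep5: "replicate 5 u = [u,u,u,u,u]" by (simp add: numeral_eq_Suc)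

lemma const_red:
  assumes u: "u \<in> {{a},{b}}" and n7: "n \<ge> 7"
  shows "q_reducible PR (replicate n u)"
proof -
  have bq: "lambda_quiddity PR [u,u,u,u,u,u]" using u
    by (auto simp: quid_iff comp2 carR)
  have cc: "set (replicate n u) \<subseteq> carrier PR" using u by (auto simp: carR)
  have "drop (n - 4) (rotate 0 (replicate n u)) = replicate 4 u" using n7 by simp
  then have dr: "drop (length (replicate n u) - (length [u,u,u,u,u,u] - 2)) (rotate 0 (replicate n u)) = butlast (tl [u,u,u,u,u,u])"
    by (simp add: numeral_eq_Suc)
  show ?thesis using reduce[OF bq _ cc _ dr] n7 by simp
qed
lemma len4_cls:
  assumes "x1 \<in> {{},{a},{b}}" "x2 \<in> {{},{a},{b}}" "x3 \<in> {{},{a},{b}}" "x4 \<in> {{},{a},{b}}"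
    "Mq PR [x1,x2,x3,x4] = mat2_id PR"
  shows "[x1,x2,x3,x4] \<in> {[{}, {}, {}, {}], [{a}, {b}, {a}, {b}], [{b}, {a}, {b}, {a}],
    [{a}, {}, {a}, {}], [{}, {a}, {}, {a}], [{b}, {}, {b}, {}], [{}, {b}, {}, {b}]}"
  using assms(5) apply -
  using assms(1-4) apply (simp only: insert_iff empty_iff)
  apply (elim disjE)
  apply (simp_all add: comp2)
  done

lemma l1: "length xs = 1 \<Longrightarrow> xs = [xs!0]" by (auto simp: length_Suc_conv)
lemma l2: "length xs = 2 \<Longrightarrow> xs = [xs!0,xs!1]" by (auto simp: numeral_eq_Suc length_Suc_conv)
lemma l3: "length xs = 3 \<Longrightarrow> xs = [xs!0,xs!1,xs!2]" by (auto simp: numeral_eq_Suc length_Suc_conv)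
lemma l4: "length xs = 4 \<Longrightarrow> xs = [xs!0,xs!1,xs!2,xs!3]" by (auto simp: numeral_eq_Suc length_Suc_conv)
lemma l5: "length xs = 5 \<Longrightarrow> xs = [xs!0,xs!1,xs!2,xs!3,xs!4]" by (auto simp: numeral_eq_Suc length_Suc_conv)

lemma cls1: "x \<in> carrier PR \<Longrightarrow> Mq PR [x] \<noteq> mat2_id PR"
  apply (drule four) apply (elim disjE) by (simp_all add: comp2)
lemma cls2: "x \<in> carrier PR \<Longrightarrow> y \<in> carrier PR \<Longrightarrow> Mq PR [x,y] = mat2_id PR \<Longrightarrow> x = {} \<and> y = {}"
  apply (drule four)+ apply (elim disjE) by (simp_all add: comp2)
lemma cls3: "x \<in> carrier PR \<Longrightarrow> y \<in> carrier PR \<Longrightarrow> z \<in> carrier PR \<Longrightarrow> Mq PR [x,y,z] = mat2_id PR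
   \<Longrightarrow> x = {a,b} \<and> y = {a,b} \<and> z = {a,b}"
  apply (drule four)+ apply (elim disjE) by (simp_all add: comp2)
lemma no4: "u \<in> {{a},{b}} \<Longrightarrow> x \<in> carrier PR \<Longrightarrow> w \<in> carrier PR \<Longrightarrow> Mq PR [x,u,u,w] \<noteq> mat2_id PR"
  apply (drule four)+ apply (simp only: insert_iff empty_iff) apply (elim disjE) by (simp_all add: comp2)
lemma no5: "u \<in> {{a},{b}} \<Longrightarrow> x \<in> carrier PR \<Longrightarrow> w \<in> carrier PR \<Longrightarrow> Mq PR [x,u,u,u,w] \<noteq> mat2_id PR"
  apply (drule four)+ apply (simp only: insert_iff empty_iff) apply (elim disjE) by (simp_all add: comp2)
lemma no5c: "u \<in> {{a},{b}} \<Longrightarrow> Mq PR [u,u,u,u,u] \<noteq> mat2_id PR"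
  apply (simp only: insert_iff empty_iff) apply (elim disjE) by (simp_all add: comp2)

lemma red_parts:
  assumes "q_reducible PR c" "length c \<ge> 3"
  obtains as bs where "lambda_quiddity PR bs" "length bs \<ge> 3" "length as \<ge> 3"
    "set as \<subseteq> carrier PR" "qequiv c (qsum PR as bs)"
  using assms unfolding q_reducible_def by auto

lemma irr4: assumes q: "lambda_quiddity PR c" and l4c: "length c = 4" and nX: "{a,b} \<notin> set c"
  shows "q_irreducible PR c"
proof -
  have "\<not> q_reducible PR c"
  proof
    assume h: "q_reducible PR c"
    have h3: "length c \<ge> 3" using l4c by simp
    obtain as bs where bq: "lambda_quiddity PR bs" "length bs \<ge> 3" "length as \<ge> 3"
        "qequiv c (qsum PR as bs)"
      using red_parts[OF h h3] by blast
    have "length (qsum PR as bs) = 4" using qequiv_len[OF bq(4)] l4c by simp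
    then have "length bs = 3" using qsum_len[of as bs] bq by simp
    then have bsl: "bs = [bs!0,bs!1,bs!2]" by (rule l3)
    have bc: "set bs \<subseteq> carrier PR" "Mq PR bs = mat2_id PR" using bq(1) by (auto simp: quid_iff)
    then have "bs!0 \<in> carrier PR" "bs!1 \<in> carrier PR" "bs!2 \<in> carrier PR"
      using bsl by (metis insert_subset list.simps(15))+
    then have "bs!1 = {a,b}" using cls3 bc(2) bsl by metis
    then have "{a,b} \<in> set (butlast (tl bs))" by (subst bsl) simp
    then have "{a,b} \<in> set c" using qsum_set qequiv_set[OF bq(4)] by blast
    with nX show False by simp
  qed
  with q show ?thesis by (simp add: q_irreducible_def)
qed

lemma irr6: assumes u: "u \<in> {{a},{b}}"
  shows "q_irreducible PR [u,u,u,u,u,u]"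
proof -
  have q: "lambda_quiddity PR [u,u,u,u,u,u]" using u by (auto simp: quid_iff comp2 carR)
  have "\<not> q_reducible PR [u,u,u,u,u,u]"
  proof
    assume h: "q_reducible PR [u,u,u,u,u,u]"
    have h3: "length [u,u,u,u,u,u] \<ge> 3" by simp
    obtain as bs where bq: "lambda_quiddity PR bs" "length bs \<ge> 3" "length as \<ge> 3"
        "qequiv (replicate 6 u) (qsum PR as bs)"
      using red_parts[OF h h3] unfolding rep6 by blast
    have qe: "qsum PR as bs = replicate 6 u" using bq(4) by (auto simp: qequiv_def rot_rep)
    have "length (qsum PR as bs) = 6" using qe by simp
    then have lb: "length bs \<le> 5" using qsum_len[of as bs] bq by simp
    have sb: "set (butlast (tl bs)) \<subseteq> {u}" using qsum_set[of bs as] qe by simp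
    have bc: "set bs \<subseteq> carrier PR" "Mq PR bs = mat2_id PR" using bq(1) by (auto simp: quid_iff)
    have bi: "\<And>i. i < length bs \<Longrightarrow> bs!i \<in> carrier PR" using bc(1) nth_mem by blast
    have uX: "u \<noteq> {a,b}" using u neqs by auto
    consider "length bs = 3" | "length bs = 4" | "length bs = 5" using lb bq(2) by linarith
    then show False
    proof cases
      case 1
      then have bsl: "bs = [bs!0,bs!1,bs!2]" by (rule l3)
      then have "bs!1 = {a,b}" using cls3 bc(2) bi 1 by (metis One_nat_def Suc_1 numeral_3_eq_3 lessI less_Suc_eq zero_less_Suc)
      moreover have "bs!1 = u" using sb by (subst (asm) bsl) simp
      ultimately show False using uX by simp
    next
      case 2
      then have bsl: "bs = [bs!0,bs!1,bs!2,bs!3]" by (rule l4)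
      have "bs!1 = u" "bs!2 = u" using sb by (subst (asm) bsl, simp)+
      then have "bs = [bs!0,u,u,bs!3]" using bsl by simp
      then show False using no4[OF u bi[of 0] bi[of 3]] bc(2) 2 by simp
    next
      case 3
      then have bsl: "bs = [bs!0,bs!1,bs!2,bs!3,bs!4]" by (rule l5)
      have "bs!1 = u" "bs!2 = u" "bs!3 = u" using sb by (subst (asm) bsl, simp)+
      then have "bs = [bs!0,u,u,u,bs!4]" using bsl by simp
      then show False using no5[OF u bi[of 0] bi[of 4]] bc(2) 3 by simp
    qed
  qed
  with q show ?thesis by (simp add: q_irreducible_def)
qed

lemma irr_cls: assumes irr: "q_irreducible PR c"
  shows "c = [{a,b},{a,b},{a,b}] \<or> c \<in> {[{}, {}, {}, {}], [{a}, {b}, {a}, {b}], [{b}, {a}, {b}, {a}],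
    [{a}, {}, {a}, {}], [{}, {a}, {}, {a}], [{b}, {}, {b}, {}], [{}, {b}, {}, {b}]} \<or>
    c = [{a},{a},{a},{a},{a},{a}] \<or> c = [{b},{b},{b},{b},{b},{b}]"
proof -
  have q: "lambda_quiddity PR c" and nr: "\<not> q_reducible PR c" using irr by (auto simp: q_irreducible_def)
  have cc: "set c \<subseteq> carrier PR" and M: "Mq PR c = mat2_id PR" and ne: "c \<noteq> []" using q by (auto simp: quid_iff)
  have ci: "\<And>i. i < length c \<Longrightarrow> c!i \<in> carrier PR" using cc nth_mem by blast
  have "length c > 0" using ne by simp
  then consider "length c = 1" | "length c = 2" | "length c = 3" | "length c = 4" | "length c \<ge> 5" by linarith
  then show ?thesis
  proof cases
    case 1
    obtain x1 where e: "c = [x1]" using l1[OF 1] by blast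
    then show ?thesis using cls1[of x1] M cc by simp
  next
    case 2
    obtain x1 x2 where e: "c = [x1,x2]" using l2[OF 2] by blast
    then have "x1 = {} \<and> x2 = {}" using cls2[of x1 x2] M cc by simp
    then have "c = [\<zero>\<^bsub>PR\<^esub>, \<zero>\<^bsub>PR\<^esub>]" using e by (simp add: zeroR)
    then show ?thesis using nr by (simp add: q_reducible_def)
  next
    case 3
    obtain x1 x2 x3 where e: "c = [x1,x2,x3]" using l3[OF 3] by blast
    then have "x1 = {a,b} \<and> x2 = {a,b} \<and> x3 = {a,b}" using cls3[of x1 x2 x3] M cc by simp
    then show ?thesis using e by simp
  next
    case 4
    have nX: "{a,b} \<notin> set c" using X_red[OF cc] 4 nr by auto
    obtain x1 x2 x3 x4 where e: "c = [x1,x2,x3,x4]" using l4[OF 4] by blast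
    have c1: "x1 \<in> carrier PR" "x2 \<in> carrier PR" "x3 \<in> carrier PR" "x4 \<in> carrier PR"
      using cc e by auto
    have n1: "x1 \<noteq> {a,b}" "x2 \<noteq> {a,b}" "x3 \<noteq> {a,b}" "x4 \<noteq> {a,b}"
      using nX e by auto
    have xs: "x1 \<in> {{},{a},{b}}" "x2 \<in> {{},{a},{b}}" "x3 \<in> {{},{a},{b}}" "x4 \<in> {{},{a},{b}}"
      using four[OF c1(1)] four[OF c1(2)] four[OF c1(3)] four[OF c1(4)] n1 by blast+
    have M4: "Mq PR [x1,x2,x3,x4] = mat2_id PR" using M e by simp
    show ?thesis unfolding e by (rule disjI2, rule disjI1, rule len4_cls[OF xs M4])
  next
    case 5
    define n where "n = length c"
    have n5: "n \<ge> 5" using 5 n_def by simp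
    have nX: "{a,b} \<notin> set c" using X_red[OF cc] 5 nr by auto
    have cj: "\<And>i. i < n \<Longrightarrow> c!i \<in> {{},{a},{b}}"
    proof -
      fix i assume "i < n"
      then have "c!i \<in> set c" "c!i \<in> carrier PR" using ci nth_mem n_def by auto
      then show "c!i \<in> {{},{a},{b}}" using four[of "c!i"] nX by auto
    qed
    have pr: "\<And>i. i < n \<Longrightarrow> c!i \<noteq> {} \<and> c!((i+1) mod n) = c!i"
    proof -
      fix i assume il: "i < n"
      have "(i+1) mod n < n" using n5 by simp
      then have v: "c!((i+1) mod length c) \<in> {{},{a},{b}}" using cj n_def by simp
      have il': "i < length c" using il n_def by simp
      show "c!i \<noteq> {} \<and> c!((i+1) mod n) = c!i"
      proof (rule ccontr)
        assume "\<not> (c!i \<noteq> {} \<and> c!((i+1) mod n) = c!i)"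
        then have "\<not> (c!i \<noteq> {} \<and> c!((i+1) mod length c) = c!i)" using n_def by simp
        then have "q_reducible PR c" by (rule pair_red[OF cc 5 il' cj[OF il] v])
        with nr show False by simp
      qed
    qed
    define u0 where "u0 = c!0"
    have all: "\<And>i. i < n \<Longrightarrow> c!i = u0"
    proof -
      fix i show "i < n \<Longrightarrow> c!i = u0"
      proof (induct i)
        case 0 then show ?case by (simp add: u0_def)
      next
        case (Suc i)
        have h1: "c!((i+1) mod n) = c!i" using pr[of i] Suc.prems by simp
        have h2: "(i+1) mod n = Suc i" using Suc.prems by simp
        have h3: "c!i = u0" using Suc.hyps Suc.prems by simp
        show ?case using h1 h2 h3 by simp
      qed
    qed
    have cr: "c = replicate n u0" using all n_def by (simp add: list_eq_iff_nth_eq)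
    have u: "u0 \<in> {{a},{b}}" using cj[of 0] pr[of 0] n5 u0_def by auto
    consider "n = 5" | "n = 6" | "n \<ge> 7" using n5 by linarith
    then show ?thesis
    proof cases
      case 1
      then show ?thesis using no5c[OF u] M cr by (simp add: rep5)
    next
      case 2
      then show ?thesis using u cr by (auto simp: rep6)
    next
      case 3
      then show ?thesis using const_red[OF u 3] cr nr by simp
    qed
  qed
qed

lemma irr3: "q_irreducible PR [{a,b},{a,b},{a,b}]"
proof -
  have q: "lambda_quiddity PR [{a,b},{a,b},{a,b}]" by (simp add: quid_iff comp2 carR)
  have "\<not> q_reducible PR [{a,b},{a,b},{a,b}]"
  proof
    assume h: "q_reducible PR [{a,b},{a,b},{a,b}]"
    have h3: "length [{a,b},{a,b},{a,b}] \<ge> 3" by simp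
    obtain as bs where bq: "lambda_quiddity PR bs" "length bs \<ge> 3" "length as \<ge> 3"
        "qequiv [{a,b},{a,b},{a,b}] (qsum PR as bs)"
      using red_parts[OF h h3] by blast
    have "length (qsum PR as bs) = 3" using qequiv_len[OF bq(4)] by simp
    then show False using qsum_len[of as bs] bq by simp
  qed
  with q show ?thesis by (simp add: q_irreducible_def)
qed

lemma irr4s: "c \<in> {[{}, {}, {}, {}], [{a}, {b}, {a}, {b}], [{b}, {a}, {b}, {a}],
    [{a}, {}, {a}, {}], [{}, {a}, {}, {a}], [{b}, {}, {b}, {}], [{}, {b}, {}, {b}]} \<Longrightarrow> q_irreducible PR c"
  apply (simp only: insert_iff empty_iff simp_thms)
  apply (elim disjE; hypsubst; rule irr4; simp add: quid_iff comp2 carR ab ab[symmetric])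
  done
end

lemma witness: "t \<in> T \<Longrightarrow> c = rotate k t \<Longrightarrow> \<exists>t\<in>T. \<exists>k. c = rotate k t" by blast

lemma rot6: "rotate k [u,u,u,u,u,u] = [u,u,u,u,u,u]"
  by (induct k) simp_all

theorem proposition3p6:
  fixes a b :: 'x
  assumes "a \<noteq> b"
  shows "{c. q_irreducible (powerset_ring a b) c} =
    {c. \<exists>t \<in> {[{a,b}, {a,b}, {a,b}],
              [{a}, {b}, {a}, {b}], [{}, {}, {}, {}], [{a}, {}, {a}, {}], [{b}, {}, {b}, {}],
              [{a}, {a}, {a}, {a}, {a}, {a}], [{b}, {b}, {b}, {b}, {b}, {b}]}.
          \<exists>k. c = rotate k t}"
  (is "?L = {c. \<exists>t \<in> ?T. \<exists>k. c = rotate k t}")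
proof (rule Set.set_eqI, rule iffI)
  fix c
  assume "c \<in> ?L"
  then have "q_irreducible (powerset_ring a b) c" by simp
  from irr_cls[OF assms this]
  have d: "c = [{a,b},{a,b},{a,b}] \<or> c = [{}, {}, {}, {}] \<or> c = [{a}, {b}, {a}, {b}] \<or> c = [{b}, {a}, {b}, {a}] \<or>
    c = [{a}, {}, {a}, {}] \<or> c = [{}, {a}, {}, {a}] \<or> c = [{b}, {}, {b}, {}] \<or> c = [{}, {b}, {}, {b}] \<or>
    c = [{a},{a},{a},{a},{a},{a}] \<or> c = [{b},{b},{b},{b},{b},{b}]" by (simp only: insert_iff empty_iff simp_thms disj_assoc)
  have "\<exists>t \<in> ?T. \<exists>k. c = rotate k t"
    using d
    apply (elim disjE)
    apply (rule witness[where t="[{a,b},{a,b},{a,b}]" and k=0]; simp)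
    apply (rule witness[where t="[{}, {}, {}, {}]" and k=0]; simp)
    apply (rule witness[where t="[{a}, {b}, {a}, {b}]" and k=0]; simp)
    apply (rule witness[where t="[{a}, {b}, {a}, {b}]" and k=1]; simp)
    apply (rule witness[where t="[{a}, {}, {a}, {}]" and k=0]; simp)
    apply (rule witness[where t="[{a}, {}, {a}, {}]" and k=1]; simp)
    apply (rule witness[where t="[{b}, {}, {b}, {}]" and k=0]; simp)
    apply (rule witness[where t="[{b}, {}, {b}, {}]" and k=1]; simp)
    apply (rule witness[where t="[{a},{a},{a},{a},{a},{a}]" and k=0]; simp)
    apply (rule witness[where t="[{b},{b},{b},{b},{b},{b}]" and k=0]; simp)
    done
  then show "c \<in> {c. \<exists>t \<in> ?T. \<exists>k. c = rotate k t}" by simp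
next
  fix c
  assume "c \<in> {c. \<exists>t \<in> ?T. \<exists>k. c = rotate k t}"
  then obtain t k where t: "t \<in> ?T" and c: "c = rotate k t" by blast
  let ?S = "{[{}, {}, {}, {}], [{a}, {b}, {a}, {b}], [{b}, {a}, {b}, {a}],
    [{a}, {}, {a}, {}], [{}, {a}, {}, {a}], [{b}, {}, {b}, {}], [{}, {b}, {}, {b}]}"
  have "q_irreducible (powerset_ring a b) c"
    using t
  proof (simp only: insert_iff empty_iff simp_thms, elim disjE)
    assume "t = [{a,b}, {a,b}, {a,b}]"
    then have "c = [{a,b}, {a,b}, {a,b}]" using c rot3[of k "{a,b}" "{a,b}" "{a,b}"] by simp
    then show ?thesis using irr3[OF assms] by simp
  next
    assume "t = [{a}, {b}, {a}, {b}]"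
    then have "c \<in> ?S" using c rot4[of k "{a}" "{b}" "{a}" "{b}"] by auto
    then show ?thesis by (rule irr4s[OF assms])
  next
    assume "t = [{}, {}, {}, {}]"
    then have "c \<in> ?S" using c rot4[of k "{}" "{}" "{}" "{}"] by auto
    then show ?thesis by (rule irr4s[OF assms])
  next
    assume "t = [{a}, {}, {a}, {}]"
    then have "c \<in> ?S" using c rot4[of k "{a}" "{}" "{a}" "{}"] by auto
    then show ?thesis by (rule irr4s[OF assms])
  next
    assume "t = [{b}, {}, {b}, {}]"
    then have "c \<in> ?S" using c rot4[of k "{b}" "{}" "{b}" "{}"] by auto
    then show ?thesis by (rule irr4s[OF assms])
  next
    assume "t = [{a}, {a}, {a}, {a}, {a}, {a}]"
    then have "c = [{a}, {a}, {a}, {a}, {a}, {a}]" using c rot6 by simp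
    then show ?thesis using irr6[OF assms, of "{a}"] by simp
  next
    assume "t = [{b}, {b}, {b}, {b}, {b}, {b}]"
    then have "c = [{b}, {b}, {b}, {b}, {b}, {b}]" using c rot6 by simp
    then show ?thesis using irr6[OF assms, of "{b}"] by simp
  qed
  then show "c \<in> ?L" by simp
qed

end
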